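(* Assume $r=\sigma_a/\sigma>3/2$. Then for every $s\ge1$, every suboptimal arm $k$ and every $T$, $$a_{k,s}:=E\big[\min\{N_{1,s}(\tau_k),T\}\big]\le M(r):=1.1+\big(1-(3/(2r))^2\big)^{-1/2}.$$
   Context: Setting: arm $k\in[K]$ has i.i.d. rewards $Y_{k,1},Y_{k,2},\dots\sim N(\mu_k,\sigma^2)$; arm 1 is optimal, $\mu_1=\max_k\mu_k$, $\Delta_k=\mu_1-\mu_k>0$ for the suboptimal arm $k$ considered, and $\tau_k=(\mu_1+\mu_k)/2$. For $s\ge1$: $\mathcal H_{k,s}=(Y_{k,1},\dots,Y_{k,s})$, $\bar Y_{k,s}=s^{-1}\sum_{i=1}^sY_{k,i}$, $\mathrm{RSS}_{k,s}=\sum_{i=1}^s(Y_{k,i}-\bar Y_{k,s})^2$. Given $\sigma_a>0$, $\mathrm{PRSS}_{s}=2(s+2)\sigma_a^2$ and $r=\sigma_a/\sigma$. The ReBoot index given $\mathcal H_{k,s}$ is $\hat\mu^*_{k,s}=\bar Y_{k,s}+\frac1{s+2}\sum_{i=1}^{s+2}w_ie_{k,i}$ with $e_{k,i}=Y_{k,i}-\bar Y_{k,s}$ ($i\le s$), $e_{k,s+1}=\sqrt{s+2}\sigma_a$, $e_{k,s+2}=-\sqrt{s+2}\sigma_a$, and $w_i$ i.i.d. $N(0,1)$ independent of the rewards; thus conditionally on $\mathcal H_{k,s}$, $\hat\mu^*_{k,s}\sim N\big(\bar Y_{k,s},(s+2)^{-2}(\mathrm{RSS}_{k,s}+\mathrm{PRSS}_s)\big)$.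 Define $Q_{k,s}(\tau)=P(\hat\mu^*_{k,s}>\tau\mid\mathcal H_{k,s})$ and $N_{1,s}(\tau)=Q_{1,s}(\tau)^{-1}-1$. *)

theory Defs
  imports "HOL-Probability.Probability"
begin

text \<open>History of one arm: a sequence y :: nat => real, with y 1, ..., y s the first s rewards.\<close>

definition ybar :: "(nat \<Rightarrow> real) \<Rightarrow> nat \<Rightarrow> real" where
  "ybar y s = (\<Sum>i=1..s. y i) / real s"

definition RSS :: "(nat \<Rightarrow> real) \<Rightarrow> nat \<Rightarrow> real" where
  "RSS y s = (\<Sum>i=1..s. (y i - ybar y s)^2)"

definition PRSS :: "real \<Rightarrow> nat \<Rightarrow> real" where
  "PRSS \<sigma>a s = 2 * (real s + 2) * \<sigma>a^2"

text \<open>Conditional law of the ReBoot index given the history: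
  N(ybar, (RSS + PRSS)/(s+2)^2); normal_density takes mean and standard deviation.\<close>

definition reboot_law :: "real \<Rightarrow> (nat \<Rightarrow> real) \<Rightarrow> nat \<Rightarrow> real measure" where
  "reboot_law \<sigma>a y s =
     density lborel (\<lambda>x. ennreal (normal_density (ybar y s)
        (sqrt (RSS y s + PRSS \<sigma>a s) / (real s + 2)) x))"

definition Qrb :: "real \<Rightarrow> (nat \<Rightarrow> real) \<Rightarrow> nat \<Rightarrow> real \<Rightarrow> real" where
  "Qrb \<sigma>a y s \<tau> = measure (reboot_law \<sigma>a y s) {\<tau><..}"

definition Nrb :: "real \<Rightarrow> (nat \<Rightarrow> real) \<Rightarrow> nat \<Rightarrow> real \<Rightarrow> real" where
  "Nrb \<sigma>a y s \<tau> = 1 / Qrb \<sigma>a y s \<tau> - 1"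

definition Mbound :: "real \<Rightarrow> real" where
  "Mbound r = 11/10 + 1 / sqrt (1 - (3 / (2 * r))^2)"

end

theory Submission
  imports Defs "HOL-Real_Asymp.Real_Asymp"
begin

definition Dl :: "real \<Rightarrow> real \<Rightarrow> real" where
  "Dl l z = z + (z^2 + 4 + l^2) / (2 * l)"

definition hb :: "real \<Rightarrow> real \<Rightarrow> real" where
  "hb l z = 2 * (exp (-(z^2) / 2) / sqrt (2 * pi)) / Dl l z"

lemma Dl_eq: "l > 0 \<Longrightarrow> Dl l z = ((z + l)^2 + 4) / (2 * l)"
  unfolding Dl_def by (simp add: field_simps power2_eq_square)

lemma Dl_pos: "l > 0 \<Longrightarrow> Dl l z > 0"
  using Dl_eq[of l z] by (smt (verit) divide_pos_pos zero_le_power2)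

lemma key_poly:
  assumes "l > 0" "z \<ge> 0"
  shows "2 * (z * Dl l z + (1 + z / l)) \<le> (Dl l z)^2"
proof -
  have e: "4*l^2*((Dl l z)^2 - 2 * (z * Dl l z + (1 + z / l))) = (z^2 - l^2 + 4)^2 + 8*l^2 - 8*l*z"
    using assms unfolding Dl_def by (simp add: field_simps power2_eq_square)
  have "(z^2 - l^2 + 4)^2 + 8*l^2 - 8*l*z \<ge> 0"
  proof (cases "z \<le> l")
    case True
    have "8*l*(l-z) \<ge> 0" using assms True by simp
    moreover have "8*l*(l-z) = 8*l^2 - 8*l*z" by (simp add: power2_eq_square algebra_simps)
    ultimately show ?thesis using zero_le_power2[of "z^2 - l^2 + 4"] by linarith
  next
    case False
    define d where "d = z - l"
    have d: "d > 0" using False d_def by simp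
    have ld: "l * d > 0" using d assms by simp
    have 1: "z^2 - l^2 + 4 = d*(d + 2*l) + 4" unfolding d_def by (simp add: power2_eq_square algebra_simps)
    have 2: "d*(d+2*l) \<ge> 2*l*d" using d assms by (simp add: algebra_simps)
    have 3: "(d*(d + 2*l) + 4)^2 \<ge> (2*l*d+4)^2" using 2 d assms
      by (intro power_mono) auto
    have 4: "(2*l*d+4)^2 = 4*(l*d)^2 + 16*(l*d) + 16" by (simp add: power2_eq_square algebra_simps)
    have 5: "8*l^2 - 8*l*z = - 8*(l*d)" unfolding d_def by (simp add: power2_eq_square algebra_simps)
    show ?thesis unfolding 1 using 3 4 5 ld zero_le_power2[of "l*d"] by linarith
  qed
  then have "0 \<le> 4*l^2*((Dl l z)^2 - 2 * (z * Dl l z + (1 + z / l)))" using e by simp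
  then have "0 \<le> (Dl l z)^2 - 2 * (z * Dl l z + (1 + z / l))" using assms by (simp add: zero_le_mult_iff)
  then show ?thesis by simp
qed

definition fb :: "real \<Rightarrow> real \<Rightarrow> real" where
  "fb l z = 2 * (exp (-(z^2) / 2) / sqrt (2 * pi)) * (z * Dl l z + (1 + z / l)) / (Dl l z)^2"

lemma aux_eq1: "(d::real) \<noteq> 0 \<Longrightarrow> s > 0 \<Longrightarrow> - ((2/s) * (((E*(-z))*d - E*(1+z/l)) / (d*d))) = 2*(E/s)*(z*d + (1+z/l))/d^2"
  by (simp add: power2_eq_square field_simps) 

lemma hb_deriv:
  assumes "l > 0"
  shows "((\<lambda>z. - hb l z) has_real_derivative fb l z) (at z)"
proof -
  have D: "Dl l z \<noteq> 0" using Dl_pos[OF assms] by (metis less_irrefl)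
  have e: "((\<lambda>z. exp (-(z^2)/2)) has_real_derivative (exp(-(z^2)/2) * (-z))) (at z)"
    by (auto intro!: derivative_eq_intros)
  have d: "((\<lambda>z. Dl l z) has_real_derivative (1 + z/l)) (at z)"
    unfolding Dl_def using assms by (auto intro!: derivative_eq_intros simp: field_simps)
  have q: "((\<lambda>z. exp (-(z^2)/2) / Dl l z) has_real_derivative
      ((exp(-(z^2)/2) * (-z)) * Dl l z - exp (-(z^2)/2) * (1 + z/l)) / (Dl l z * Dl l z)) (at z)"
    by (rule DERIV_divide[OF e d D])
  have q2: "((\<lambda>z. - ((2 / sqrt (2*pi)) * (exp (-(z^2)/2) / Dl l z))) has_real_derivative
      - ((2 / sqrt (2*pi)) * (((exp(-(z^2)/2) * (-z)) * Dl l z - exp (-(z^2)/2) * (1 + z/l)) / (Dl l z * Dl l z)))) (at z)"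
    by (intro DERIV_minus DERIV_cmult q)
  have eq: "- ((2 / sqrt (2*pi)) * (((exp(-(z^2)/2) * (-z)) * Dl l z - exp (-(z^2)/2) * (1 + z/l)) / (Dl l z * Dl l z))) = fb l z"
    unfolding fb_def by (rule aux_eq1[OF D]) simp
  have f: "(\<lambda>z. - hb l z) = (\<lambda>z. - ((2 / sqrt (2*pi)) * (exp (-(z^2)/2) / Dl l z)))"
    unfolding hb_def by (auto simp: field_simps)
  show ?thesis using q2 unfolding eq f .
qed

lemma hb_lim: "l > 0 \<Longrightarrow> ((\<lambda>z. - hb l z) \<longlongrightarrow> 0) at_top"
  unfolding hb_def Dl_def by real_asymp

lemma fb_nonneg: "l > 0 \<Longrightarrow> z \<ge> 0 \<Longrightarrow> fb l z \<ge> 0"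
  unfolding fb_def using Dl_pos[of l z] by (auto intro!: divide_nonneg_pos mult_nonneg_nonneg add_nonneg_nonneg)

lemma fb_le: "l > 0 \<Longrightarrow> z \<ge> 0 \<Longrightarrow> fb l z \<le> std_normal_density z"
proof -
  assume l: "l > 0" and z: "z \<ge> 0"
  have D: "Dl l z > 0" using Dl_pos[OF l] .
  have "fb l z = (exp (-(z^2) / 2) / sqrt (2 * pi)) * (2 * (z * Dl l z + (1 + z / l)) / (Dl l z)^2)"
    unfolding fb_def by simp
  also have "\<dots> \<le> (exp (-(z^2) / 2) / sqrt (2 * pi)) * 1"
    using key_poly[OF l z] D by (intro mult_left_mono) auto
  finally show ?thesis by (simp add: std_normal_density_def)
qed

lemma fb_meas[measurable]: "fb l \<in> borel_measurable borel"
  unfolding fb_def Dl_def by measurable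

lemma tail_std:
  assumes l: "l > 0" and a: "a \<ge> 0"
  shows "ennreal (hb l a) \<le> (\<integral>\<^sup>+x. ennreal (std_normal_density x) * indicator {a..} x \<partial>lborel)"
proof -
  have "(\<integral>\<^sup>+x. ennreal (fb l x) * indicator {a..} x \<partial>lborel) = 0 - (- hb l a)"
    by (rule nn_integral_FTC_atLeast[OF fb_meas hb_deriv[OF l] fb_nonneg[OF l] hb_lim[OF l]])
      (use a in auto)
  then have "ennreal (hb l a) = (\<integral>\<^sup>+x. ennreal (fb l x) * indicator {a..} x \<partial>lborel)" by simp
  also have "\<dots> \<le> (\<integral>\<^sup>+x. ennreal (std_normal_density x) * indicator {a..} x \<partial>lborel)"
    using a by (intro nn_integral_mono) (auto split: split_indicator intro!: fb_le[OF l])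
  finally show ?thesis .
qed

lemma nd_affine:
  assumes sd: "sd > 0" and A[measurable]: "A \<in> sets borel"
  shows "(\<integral>\<^sup>+x. ennreal (normal_density m sd x) * indicator A x \<partial>lborel)
       = (\<integral>\<^sup>+z. ennreal (std_normal_density z) * indicator A (m + sd * z) \<partial>lborel)"
proof -
  have "(\<integral>\<^sup>+x. ennreal (normal_density m sd x) * indicator A x \<partial>lborel)
      = ennreal \<bar>sd\<bar> * (\<integral>\<^sup>+z. ennreal (normal_density m sd (m + sd * z)) * indicator A (m + sd * z) \<partial>lborel)"
    by (rule nn_integral_real_affine) (use sd in auto)
  also have "\<dots> = (\<integral>\<^sup>+z. ennreal sd * (ennreal (normal_density m sd (m + sd * z)) * indicator A (m + sd * z)) \<partial>lborel)"
    using sd by (subst nn_integral_cmult) auto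
  also have "\<dots> = (\<integral>\<^sup>+z. ennreal (std_normal_density z) * indicator A (m + sd * z) \<partial>lborel)"
  proof (intro nn_integral_cong)
    fix z :: real
    have "sd * normal_density m sd (m + sd * z) = std_normal_density z"
      using sd unfolding normal_density_def
      by (simp add: real_sqrt_mult power_mult_distrib field_simps)
    then show "ennreal sd * (ennreal (normal_density m sd (m + sd * z)) * indicator A (m + sd * z))
      = ennreal (std_normal_density z) * indicator A (m + sd * z)"
      using sd by (simp add: ennreal_mult'[symmetric] mult.assoc[symmetric])
  qed
  finally show ?thesis .
qed

lemma emeasure_nd_tail:
  assumes sd: "sd > 0"
  shows "emeasure (density lborel (\<lambda>x. ennreal (normal_density m sd x))) {t<..}
     = (\<integral>\<^sup>+z. ennreal (std_normal_density z) * indicator {(t - m) / sd<..} z \<partial>lborel)"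
proof -
  have "emeasure (density lborel (\<lambda>x. ennreal (normal_density m sd x))) {t<..}
      = (\<integral>\<^sup>+x. ennreal (normal_density m sd x) * indicator {t<..} x \<partial>lborel)"
    by (rule emeasure_density) auto
  also have "\<dots> = (\<integral>\<^sup>+z. ennreal (std_normal_density z) * indicator {t<..} (m + sd * z) \<partial>lborel)"
    by (rule nd_affine[OF sd]) auto
  also have "\<dots> = (\<integral>\<^sup>+z. ennreal (std_normal_density z) * indicator {(t - m) / sd<..} z \<partial>lborel)"
  proof (intro nn_integral_cong)
    fix z :: real
    have "(t < m + sd * z) = ((t - m) / sd < z)" using sd by (simp add: field_simps)
    then show "ennreal (std_normal_density z) * indicator {t<..} (m + sd * z) =
         ennreal (std_normal_density z) * indicator {(t - m) / sd<..} z"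
      by (simp split: split_indicator)
  qed
  finally show ?thesis .
qed

lemma std_open_closed:
  "(\<integral>\<^sup>+z. ennreal (std_normal_density z) * indicator {a<..} z \<partial>lborel)
  = (\<integral>\<^sup>+z. ennreal (std_normal_density z) * indicator {a..} z \<partial>lborel)"
  by (intro nn_integral_cong_AE) (use AE_lborel_singleton[of a] in \<open>auto elim!: eventually_mono split: split_indicator\<close>)

lemma nd_prob: "sd > 0 \<Longrightarrow> prob_space (density lborel (\<lambda>x. ennreal (normal_density m sd x)))"
  using prob_space_normal_density by auto

lemma Q_lower:
  assumes sd: "sd > 0" and l: "l > 0" and t: "t \<ge> m"
  shows "hb l ((t - m) / sd) \<le> measure (density lborel (\<lambda>x. ennreal (normal_density m sd x))) {t<..}"
proof -
  interpret P: prob_space "density lborel (\<lambda>x. ennreal (normal_density m sd x))" by (rule nd_prob[OF sd])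
  have a: "(t - m) / sd \<ge> 0" using sd t by simp
  have "ennreal (hb l ((t - m) / sd)) \<le> emeasure (density lborel (\<lambda>x. ennreal (normal_density m sd x))) {t<..}"
    unfolding emeasure_nd_tail[OF sd] std_open_closed by (rule tail_std[OF l a])
  then show ?thesis
    by (simp add: P.emeasure_eq_measure)
qed

lemma std_half: "(\<integral>\<^sup>+z. ennreal (std_normal_density z) * indicator {0..} z \<partial>lborel) = ennreal (1/2)"
proof -
  let ?f = "\<lambda>z::real. indicator {0..} z *\<^sub>R std_normal_density z"
  have int: "integrable lborel ?f"
    by (intro integrable_mult_indicator) auto
  define I where "I = integral\<^sup>L lborel ?f"
  have "has_bochner_integral lborel ?f I" using int unfolding I_def by (rule has_bochner_integral_integrable)
  then have "has_bochner_integral lborel std_normal_density (2 *\<^sub>R I)"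
    by (rule has_bochner_integral_even_function) (simp add: std_normal_density_def)
  moreover have "has_bochner_integral lborel std_normal_density 1"
    using integral_normal_density[of 1 0] integrable_normal_density[of 1 0]
    by (simp add: has_bochner_integral_iff)
  ultimately have "2 * I = 1" using has_bochner_integral_eq by fastforce
  then have I: "I = 1/2" by simp
  have "(\<integral>\<^sup>+z. ennreal (std_normal_density z) * indicator {0..} z \<partial>lborel) = (\<integral>\<^sup>+z. ennreal (?f z) \<partial>lborel)"
    by (intro nn_integral_cong) (auto split: split_indicator)
  also have "\<dots> = ennreal I" unfolding I_def
    by (rule nn_integral_eq_integral[OF int]) auto
  finally show ?thesis using I by simp
qed

lemma Q_half:
  assumes sd: "sd > 0" and t: "t \<le> m"
  shows "1/2 \<le> measure (density lborel (\<lambda>x. ennreal (normal_density m sd x))) {t<..}"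
proof -
  interpret P: prob_space "density lborel (\<lambda>x. ennreal (normal_density m sd x))" by (rule nd_prob[OF sd])
  have a: "(t - m) / sd \<le> 0" using sd t by (simp add: divide_nonpos_pos)
  have "ennreal (1/2) = (\<integral>\<^sup>+z. ennreal (std_normal_density z) * indicator {0<..} z \<partial>lborel)"
    using std_half std_open_closed[of 0] by simp
  also have "\<dots> \<le> (\<integral>\<^sup>+z. ennreal (std_normal_density z) * indicator {(t - m) / sd<..} z \<partial>lborel)"
    using a by (intro nn_integral_mono) (auto split: split_indicator)
  also have "\<dots> = emeasure (density lborel (\<lambda>x. ennreal (normal_density m sd x))) {t<..}"
    by (rule emeasure_nd_tail[OF sd, symmetric])
  finally have "ennreal (1/2) \<le> ennreal (measure (density lborel (\<lambda>x. ennreal (normal_density m sd x))) {t<..})"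
    by (simp only: P.emeasure_eq_measure)
  then show ?thesis by (metis ennreal_le_iff measure_nonneg)
qed

lemma Q_le1: "sd > 0 \<Longrightarrow> measure (density lborel (\<lambda>x. ennreal (normal_density m sd x))) A \<le> 1"
  using prob_space.prob_le_1[OF nd_prob] by blast

lemma hb_bounds:
  assumes l: "l > 0" and v: "v \<ge> 0"
  shows "0 < hb l v" "hb l v \<le> 1/2"
proof -
  have D2: "Dl l v \<ge> 2"
  proof -
    have "(l - 2)^2 \<ge> 0" by simp
    then have "(4 + l^2) / (2 * l) \<ge> 2" using l by (simp add: field_simps power2_eq_square algebra_simps)
    moreover have "v^2 / (2*l) \<ge> 0" using l by simp
    moreover have "Dl l v = v + v^2/(2*l) + (4 + l^2) / (2 * l)" unfolding Dl_def by (simp add: add_divide_distrib)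
    ultimately show ?thesis using v by linarith
  qed
  have s: "sqrt (2 * pi) \<ge> 2"
  proof -
    have "2 * pi \<ge> 2^2" using pi_ge_two by simp
    then show ?thesis by (metis real_le_rsqrt)
  qed
  have e: "exp (-(v^2) / 2) \<le> 1" by simp
  show "0 < hb l v" unfolding hb_def using Dl_pos[OF l, of v] by simp
  have "hb l v = 2 * (exp (-(v^2) / 2) / sqrt (2 * pi)) / Dl l v" by (simp add: hb_def)
  also have "\<dots> \<le> 2 * (1 / 2) / 2"
    using s e D2 by (intro divide_mono mult_left_mono frac_le) auto
  finally show "hb l v \<le> 1/2" by simp
qed

definition Gfun :: "real \<Rightarrow> real \<Rightarrow> real \<Rightarrow> real" where
  "Gfun l c x = (if x \<le> 0 then 1 else 1 / hb l (c * x) - 1)"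

lemma hb_meas[measurable]: "(\<lambda>x. hb l x) \<in> borel_measurable borel"
  unfolding hb_def Dl_def by measurable

lemma Gfun_meas[measurable]: "Gfun l c \<in> borel_measurable borel"
  unfolding Gfun_def by measurable

lemma Gfun_nonneg: "l > 0 \<Longrightarrow> c \<ge> 0 \<Longrightarrow> Gfun l c x \<ge> 0"
  using hb_bounds[of l "c*x"] by (auto simp: Gfun_def field_simps)

lemma Gfun_sym:
  assumes l: "l > 0" and c: "c \<ge> 0"
  shows "Gfun l c x + Gfun l c (-x) \<le> 1 / hb l (c * \<bar>x\<bar>)"
proof -
  consider "x > 0" | "x < 0" | "x = 0" by linarith
  then show ?thesis
  proof cases
    case 3
    then show ?thesis using hb_bounds[OF l, of 0] by (simp add: Gfun_def field_simps)
  qed (auto simp: Gfun_def)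
qed

lemma phiK_eq:
  assumes l: "l > 0" and c: "0 \<le> c" "c < 1"
  defines "\<rho> \<equiv> 1 / sqrt (1 - c^2)"
  shows "std_normal_density x * (1 / hb l (c * \<bar>x\<bar>)) / 2
    = sqrt (2 * pi) * \<rho> / 4 * (normal_density 0 \<rho> x * (c * \<bar>x\<bar> + (c^2 * x^2 + 4 + l^2) / (2 * l)))"
proof -
  have c2: "c^2 < 1" using c by (simp add: power_less_one_iff abs_less_iff)
  have b: "1 - c^2 > 0" using c2 by simp
  have rho: "\<rho> > 0" unfolding \<rho>_def using b by simp
  have rho2: "\<rho>^2 = 1 / (1 - c^2)" unfolding \<rho>_def using b by (simp add: power_divide)
  have D: "Dl l (c * \<bar>x\<bar>) = c * \<bar>x\<bar> + (c^2 * x^2 + 4 + l^2) / (2 * l)"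
    unfolding Dl_def by (simp add: power_mult_distrib)
  have Dp: "Dl l (c * \<bar>x\<bar>) > 0" by (rule Dl_pos[OF l])
  have e1: "exp (-(x^2)/2) / exp (-((c * \<bar>x\<bar>)^2) / 2) = exp (- (x^2 / (2 * \<rho>^2)))"
  proof -
    have "exp (-(x^2)/2) / exp (-((c * \<bar>x\<bar>)^2) / 2) = exp (-(x^2)/2 - (-((c * \<bar>x\<bar>)^2) / 2))"
      by (simp only: exp_diff)
    also have "-(x^2)/2 - (-((c * \<bar>x\<bar>)^2) / 2) = - (x^2 / (2 * \<rho>^2))"
      unfolding rho2 using b by (simp add: power_mult_distrib field_simps)
    finally show ?thesis .
  qed
  have sq: "sqrt (2 * pi * \<rho>^2) = sqrt (2 * pi) * \<rho>"
    using rho by (simp add: real_sqrt_mult)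
  have "std_normal_density x * (1 / hb l (c * \<bar>x\<bar>)) / 2
     = Dl l (c * \<bar>x\<bar>) / 4 * (exp (-(x^2)/2) / exp (-((c * \<bar>x\<bar>)^2) / 2))"
    unfolding hb_def std_normal_density_def using Dp by (simp add: field_simps)
  also have "\<dots> = Dl l (c * \<bar>x\<bar>) / 4 * exp (- (x^2 / (2 * \<rho>^2)))" by (simp only: e1)
  also have "\<dots> = sqrt (2 * pi) * \<rho> / 4 * (normal_density 0 \<rho> x * Dl l (c * \<bar>x\<bar>))"
    unfolding normal_density_def sq using rho by (simp add: field_simps)
  finally show ?thesis unfolding D .
qed

lemma gauss_poly_integral:
  assumes rho: "\<rho> > 0" and l: "l > 0"
  shows "has_bochner_integral lborel (\<lambda>x. normal_density 0 \<rho> x * (c * \<bar>x\<bar> + (c^2 * x^2 + 4 + l^2) / (2 * l)))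
     (c * (\<rho> * sqrt (2 / pi)) + (c^2 * \<rho>^2 + 4 + l^2) / (2 * l))"
proof -
  have m1: "has_bochner_integral lborel (\<lambda>x. normal_density 0 \<rho> x * \<bar>x\<bar>) (\<rho> * sqrt (2 / pi))"
    using normal_moment_abs_odd[OF rho, of 0 0] by simp
  have m2: "has_bochner_integral lborel (\<lambda>x. normal_density 0 \<rho> x * x^2) (\<rho>^2)"
  proof -
    have "has_bochner_integral lborel (\<lambda>x. normal_density 0 \<rho> x * (x - 0)^(2*1)) (fact (2*1) / ((2/\<rho>^2)^1 * fact 1))"
      by (rule normal_moment_even[OF rho])
    then show ?thesis
      by (rule has_bochner_integral_cong[THEN iffD1, rotated -1]) (use rho in \<open>auto simp: field_simps power2_eq_square\<close>)
  qed
  have m0: "has_bochner_integral lborel (\<lambda>x. normal_density 0 \<rho> x) 1"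
    using integrable_normal_density[OF rho, of 0] integral_normal_density[OF rho, of 0]
    by (simp add: has_bochner_integral_iff)
  have "has_bochner_integral lborel (\<lambda>x. c * (normal_density 0 \<rho> x * \<bar>x\<bar>)
      + ((c^2 / (2*l)) * (normal_density 0 \<rho> x * x^2) + ((4 + l^2) / (2 * l)) * normal_density 0 \<rho> x))
     (c * (\<rho> * sqrt (2 / pi)) + ((c^2 / (2*l)) * \<rho>^2 + ((4 + l^2) / (2 * l)) * 1))"
    by (intro has_bochner_integral_add has_bochner_integral_mult_right m0 m1 m2)
  then show ?thesis
    by (rule has_bochner_integral_cong[THEN iffD1, rotated -1]) (use l in \<open>auto simp: field_simps\<close>)
qed

lemma gauss_bound:
  assumes l: "l > 0" and c: "0 \<le> c" "c < 1"
  defines "\<rho> \<equiv> 1 / sqrt (1 - c^2)"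
  shows "integrable lborel (\<lambda>x. std_normal_density x * Gfun l c x)"
    "(\<integral>x. std_normal_density x * Gfun l c x \<partial>lborel)
       \<le> sqrt (2 * pi) * \<rho> / 4 * (c * (\<rho> * sqrt (2 / pi)) + (c^2 * \<rho>^2 + 4 + l^2) / (2 * l))"
proof -
  have c2: "c^2 < 1" using c by (simp add: power_less_one_iff abs_less_iff)
  have rho: "\<rho> > 0" unfolding \<rho>_def using c2 by simp
  define V where "V = sqrt (2 * pi) * \<rho> / 4 * (c * (\<rho> * sqrt (2 / pi)) + (c^2 * \<rho>^2 + 4 + l^2) / (2 * l))"
  define Kf where "Kf x = std_normal_density x * (1 / hb l (c * \<bar>x\<bar>)) / 2" for x
  have hK: "has_bochner_integral lborel Kf V"
    unfolding V_def Kf_def phiK_eq[OF l c, folded \<rho>_def]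
    by (intro has_bochner_integral_mult_right gauss_poly_integral rho l)
  have iK: "integrable lborel Kf" using hK by (simp add: has_bochner_integral_iff)
  have iK2: "integrable lborel (\<lambda>x. 2 * Kf x)" using iK by simp
  have Kf_nonneg: "Kf x \<ge> 0" for x
    using hb_bounds[OF l, of "c * \<bar>x\<bar>"] c unfolding Kf_def by simp
  have bnd: "std_normal_density x * Gfun l c x + std_normal_density x * Gfun l c (-x) \<le> 2 * Kf x" for x
  proof -
    have "std_normal_density x * Gfun l c x + std_normal_density x * Gfun l c (-x)
      = std_normal_density x * (Gfun l c x + Gfun l c (-x))" by (simp add: algebra_simps)
    also have "\<dots> \<le> std_normal_density x * (1 / hb l (c * \<bar>x\<bar>))"
      by (intro mult_left_mono Gfun_sym[OF l c(1)]) simp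
    finally show ?thesis unfolding Kf_def by simp
  qed
  have G0: "Gfun l c x \<ge> 0" for x by (rule Gfun_nonneg[OF l c(1)])
  have i1: "integrable lborel (\<lambda>x. std_normal_density x * Gfun l c x)"
  proof (rule Bochner_Integration.integrable_bound[OF iK2])
    show "AE x in lborel. norm (std_normal_density x * Gfun l c x) \<le> norm (2 * Kf x)"
    proof (rule AE_I2)
      fix x
      have a: "0 \<le> std_normal_density x * Gfun l c x" using G0 by simp
      have b: "0 \<le> std_normal_density x * Gfun l c (-x)" using G0 by simp
      show "norm (std_normal_density x * Gfun l c x) \<le> norm (2 * Kf x)"
        using bnd[of x] a b Kf_nonneg[of x] by simp
    qed
  qed simp
  have i2: "integrable lborel (\<lambda>x. std_normal_density x * Gfun l c (-x))"
  proof (rule Bochner_Integration.integrable_bound[OF iK2])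
    show "AE x in lborel. norm (std_normal_density x * Gfun l c (-x)) \<le> norm (2 * Kf x)"
    proof (rule AE_I2)
      fix x
      have a: "0 \<le> std_normal_density x * Gfun l c x" using G0 by simp
      have b: "0 \<le> std_normal_density x * Gfun l c (-x)" using G0 by simp
      show "norm (std_normal_density x * Gfun l c (-x)) \<le> norm (2 * Kf x)"
        using bnd[of x] a b Kf_nonneg[of x] by simp
    qed
  qed simp
  have refl: "(\<integral>x. std_normal_density x * Gfun l c x \<partial>lborel) = (\<integral>x. std_normal_density x * Gfun l c (-x) \<partial>lborel)"
    using lborel_integral_real_affine[of "-1" "\<lambda>x. std_normal_density x * Gfun l c x" 0]
    by (simp add: std_normal_density_def)
  have "2 * (\<integral>x. std_normal_density x * Gfun l c x \<partial>lborel)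
     = (\<integral>x. std_normal_density x * Gfun l c x + std_normal_density x * Gfun l c (-x) \<partial>lborel)"
    using refl i1 i2 by (simp add: Bochner_Integration.integral_add)
  also have "\<dots> \<le> (\<integral>x. 2 * Kf x \<partial>lborel)"
    by (intro integral_mono bnd iK2 Bochner_Integration.integrable_add i1 i2)
  also have "\<dots> = 2 * V" using hK by (simp add: has_bochner_integral_integral_eq)
  finally show "(\<integral>x. std_normal_density x * Gfun l c x \<partial>lborel) \<le> V" by simp
  show "integrable lborel (\<lambda>x. std_normal_density x * Gfun l c x)" by (rule i1)
qed

lemma sqrt_tangent:
  assumes "0 \<le> u" "u \<le> 1"
  shows "sqrt (pi * (4 - 3 * u) / 2) \<le> 25067/10000 * (1 - 3/8 * u)"
proof -
  have p: "pi \<le> 3.1415926535899" using pi_approx by simp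
  have "pi * (4 - 3 * u) / 2 = 2 * pi * (1 - 3/4 * u)" by (simp add: field_simps)
  also have "\<dots> \<le> 2 * pi * (1 - 3/8 * u)^2"
    using assms pi_gt_zero by (intro mult_left_mono) (auto simp: power2_eq_square algebra_simps)
  also have "\<dots> \<le> (25067/10000)^2 * (1 - 3/8 * u)^2"
    using p by (intro mult_right_mono) (auto simp: power2_eq_square)
  also have "\<dots> = (25067/10000 * (1 - 3/8 * u))^2" by (simp only: power_mult_distrib)
  finally show ?thesis using assms by (intro real_le_lsqrt) auto
qed

lemma piece:
  fixes a b c q :: real
  assumes "0 \<le> a" "a \<le> c" "c \<le> b" "b < 1" "q \<ge> 0" "q^2 * (1 - 3/2 * a^2) \<le> 1"
    "b + 25067/10000 * (1 - 3/8 * a^2) \<le> 2 * (1 - b^2) * (11/10 + q)"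
    "c^2 < 2/3"
  shows "(c + 25067/10000 * (1 - 3/8 * c^2)) / (2 * (1 - c^2)) \<le> 11/10 + 1 / sqrt (1 - 3/2 * c^2)"
proof -
  have c0: "0 \<le> c" using assms by linarith
  have a2: "a^2 \<le> c^2" using assms by (intro power_mono) auto
  have c2: "c^2 \<le> b^2" using assms c0 by (intro power_mono) auto
  have b0: "0 \<le> b" using assms c0 by linarith
  have "b^2 \<le> b" using b0 assms by (simp add: power2_eq_square mult_left_le)
  then have b2: "b^2 < 1" using assms by linarith
  have pa: "0 < 1 - 3/2 * a^2" using a2 assms by linarith
  have pc: "0 < 1 - 3/2 * c^2" using assms by linarith
  have sa: "sqrt (1 - 3/2 * a^2) > 0" using pa by simp
  have sc: "sqrt (1 - 3/2 * c^2) > 0" using pc by simp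
  have "q * sqrt (1 - 3/2 * a^2) \<le> 1"
  proof -
    have "(q * sqrt (1 - 3/2 * a^2))^2 \<le> 1^2" using pa assms by (simp add: power_mult_distrib)
    then show ?thesis by (rule power2_le_imp_le) simp
  qed
  then have "q \<le> 1 / sqrt (1 - 3/2 * a^2)" using sa by (simp add: le_divide_eq)
  also have "\<dots> \<le> 1 / sqrt (1 - 3/2 * c^2)"
  proof (rule divide_left_mono)
    show "sqrt (1 - 3/2 * c^2) \<le> sqrt (1 - 3/2 * a^2)" using a2 by simp
  qed (use sa sc in auto)
  finally have q: "q \<le> 1 / sqrt (1 - 3/2 * c^2)" .
  have num: "c + 25067/10000 * (1 - 3/8 * c^2) \<le> b + 25067/10000 * (1 - 3/8 * a^2)"
  proof -
    have "25067/10000 * (1 - 3/8 * c^2) \<le> 25067/10000 * (1 - 3/8 * a^2)" using a2 by simp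
    then show ?thesis using assms(3) by linarith
  qed
  have num0: "0 \<le> c + 25067/10000 * (1 - 3/8 * c^2)"
  proof -
    have "0 \<le> 1 - 3/8 * c^2" using assms by linarith
    then show ?thesis using c0 by simp
  qed
  have "(c + 25067/10000 * (1 - 3/8 * c^2)) / (2 * (1 - c^2)) \<le> (c + 25067/10000 * (1 - 3/8 * c^2)) / (2 * (1 - b^2))"
    using c2 b2 num0 by (intro divide_left_mono) auto
  also have "\<dots> \<le> (b + 25067/10000 * (1 - 3/8 * a^2)) / (2 * (1 - b^2))"
    using num b2 by (intro divide_right_mono) auto
  also have "\<dots> \<le> 11/10 + q" using assms(7) b2 by (simp add: divide_le_eq mult.commute)
  finally show ?thesis using q by linarith
qed

lemma final_ineq:
  fixes c :: real
  assumes "0 \<le> c" "c^2 < 2/3"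
  shows "(c + 25067/10000 * (1 - 3/8 * c^2)) / (2 * (1 - c^2)) \<le> 11/10 + 1 / sqrt (1 - 3/2 * c^2)"
proof -
  have "c < 8165/10000"
  proof (rule ccontr)
    assume "\<not> ?thesis"
    then have "(8165/10000) * (8165/10000) \<le> c * c" by (intro mult_mono) auto
    then show False using assms by (simp add: power2_eq_square)
  qed
  then consider "c \<le> 524/1000" | "524/1000 \<le> c \<and> c \<le> 631/1000" | "631/1000 \<le> c \<and> c \<le> 686/1000"
    | "686/1000 \<le> c \<and> c \<le> 724/1000" | "724/1000 \<le> c \<and> c \<le> 757/1000" | "757/1000 \<le> c \<and> c \<le> 795/1000"
    | "795/1000 \<le> c \<and> c \<le> 8165/10000" by linarith
  then show ?thesis
  proof cases
    
    case 1 then show ?thesis using assms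
      apply (intro piece[where a="0" and b="524/1000" and q="1"])
      apply simp_all
      apply (simp_all add: power2_eq_square)
      done
    next
    case 2 then show ?thesis using assms
      apply (intro piece[where a="524/1000" and b="631/1000" and q="13/10"])
      apply simp_all
      apply (simp_all add: power2_eq_square)
      done
    next
    case 3 then show ?thesis using assms
      apply (intro piece[where a="631/1000" and b="686/1000" and q="157/100"])
      apply simp_all
      apply (simp_all add: power2_eq_square)
      done
    next
    case 4 then show ?thesis using assms
      apply (intro piece[where a="686/1000" and b="724/1000" and q="46/25"])
      apply simp_all
      apply (simp_all add: power2_eq_square)
      done
    next
    case 5 then show ?thesis using assms
      apply (intro piece[where a="724/1000" and b="757/1000" and q="54/25"])
      apply simp_all
      apply (simp_all add: power2_eq_square)
      done
    next
    case 6 then show ?thesis using assms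
      apply (intro piece[where a="757/1000" and b="795/1000" and q="133/50"])
      apply simp_all
      apply (simp_all add: power2_eq_square)
      done
    next
    case 7 then show ?thesis using assms
      apply (intro piece[where a="795/1000" and b="8165/10000" and q="219/50"])
      apply simp_all
      apply (simp_all add: power2_eq_square)
      done
  qed
qed

lemma alg_aux:
  fixes d X Y S c :: real
  assumes "d > 0" "X * Y = 2 * S"
  shows "2 * c * (1 / d) / 4 + X * (Y / d) / 4 = (c + S) / (2 * d)"
proof -
  have "X * (Y / d) = 2 * S / d" using assms by (simp add: mult.assoc[symmetric])
  then show ?thesis using assms by (simp add: field_simps)
qed

lemma V_value:
  assumes c: "0 \<le> c" "c^2 < 2/3"
  defines "\<rho> \<equiv> 1 / sqrt (1 - c^2)"
  defines "l \<equiv> sqrt (c^2 * \<rho>^2 + 4)"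
  shows "sqrt (2 * pi) * \<rho> / 4 * (c * (\<rho> * sqrt (2 / pi)) + (c^2 * \<rho>^2 + 4 + l^2) / (2 * l))
     \<le> 11/10 + 1 / sqrt (1 - 3/2 * c^2)"
proof -
  have b: "1 - c^2 > 0" using c by simp
  have rho: "\<rho> > 0" unfolding \<rho>_def using b by simp
  have rho2: "\<rho>^2 = 1 / (1 - c^2)" unfolding \<rho>_def using b by (simp add: power_divide)
  have l: "l > 0" unfolding l_def by (simp add: add_nonneg_pos)
  have l2: "l^2 = c^2 * \<rho>^2 + 4" unfolding l_def by simp
  have "(c^2 * \<rho>^2 + 4 + l^2) / (2 * l) = l" using l unfolding l2[symmetric] by (simp add: field_simps power2_eq_square)
  then have "sqrt (2 * pi) * \<rho> / 4 * (c * (\<rho> * sqrt (2 / pi)) + (c^2 * \<rho>^2 + 4 + l^2) / (2 * l))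
     = sqrt (2 * pi) * sqrt (2 / pi) * c * \<rho>^2 / 4 + sqrt (2 * pi) * (\<rho> * l) / 4"
    by (simp add: algebra_simps power2_eq_square)
  also have "sqrt (2 * pi) * sqrt (2 / pi) = 2"
    by (simp add: real_sqrt_mult[symmetric]) 
  also have "\<rho> * l = sqrt (4 - 3 * c^2) / (1 - c^2)"
  proof -
    have "\<rho> * l = sqrt (\<rho>^2 * (c^2 * \<rho>^2 + 4))" unfolding l_def using rho by (simp add: real_sqrt_mult)
    also have "\<rho>^2 * (c^2 * \<rho>^2 + 4) = (4 - 3 * c^2) / (1 - c^2)^2"
      unfolding rho2 using b by (simp add: field_simps power2_eq_square)
    also have "sqrt \<dots> = sqrt (4 - 3 * c^2) / (1 - c^2)"
      using b by (simp add: real_sqrt_divide)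
    finally show ?thesis .
  qed
  also have "2 * c * \<rho>^2 / 4 + sqrt (2 * pi) * (sqrt (4 - 3 * c^2) / (1 - c^2)) / 4
      = (c + sqrt (pi * (4 - 3 * c^2) / 2)) / (2 * (1 - c^2))"
  proof -
    have "sqrt (2 * pi) * sqrt (4 - 3 * c^2) = 2 * sqrt (pi * (4 - 3 * c^2) / 2)"
    proof -
      have "sqrt (2 * pi) * sqrt (4 - 3 * c^2) = sqrt (2 * pi * (4 - 3 * c^2))"
        by (rule real_sqrt_mult[symmetric])
      also have "2 * pi * (4 - 3 * c^2) = 4 * (pi * (4 - 3 * c^2) / 2)" by simp
      also have "sqrt (4 * (pi * (4 - 3 * c^2) / 2)) = sqrt 4 * sqrt (pi * (4 - 3 * c^2) / 2)"
        by (rule real_sqrt_mult)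
      also have "sqrt (4::real) = 2" by (simp add: real_sqrt_eq_iff)
      finally show ?thesis .
    qed
    then show ?thesis unfolding rho2 by (rule alg_aux[OF b])
  qed
  also have "\<dots> \<le> (c + 25067/10000 * (1 - 3/8 * c^2)) / (2 * (1 - c^2))"
    using sqrt_tangent[of "c^2"] c b by (intro divide_right_mono add_left_mono) auto
  also have "\<dots> \<le> 11/10 + 1 / sqrt (1 - 3/2 * c^2)" by (rule final_ineq[OF c])
  finally show ?thesis .
qed

lemma gauss_final:
  assumes c: "0 \<le> c" "c^2 < 2/3"
  obtains l where "l > 0" "integrable lborel (\<lambda>x. std_normal_density x * Gfun l c x)"
    "(\<integral>x. std_normal_density x * Gfun l c x \<partial>lborel) \<le> 11/10 + 1 / sqrt (1 - 3/2 * c^2)"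
proof -
  define \<rho> where "\<rho> = 1 / sqrt (1 - c^2)"
  define l where "l = sqrt (c^2 * \<rho>^2 + 4)"
  have l: "l > 0" unfolding l_def by (simp add: add_nonneg_pos)
  have c1: "c < 1"
  proof (rule ccontr)
    assume "\<not> c < 1" then have "1 * 1 \<le> c * c" by (intro mult_mono) auto
    then show False using c by (simp add: power2_eq_square)
  qed
  have v: "sqrt (2 * pi) * \<rho> / 4 * (c * (\<rho> * sqrt (2 / pi)) + (c^2 * \<rho>^2 + 4 + l^2) / (2 * l))
     \<le> 11/10 + 1 / sqrt (1 - 3/2 * c^2)"
    unfolding l_def \<rho>_def by (rule V_value[OF c])
  show ?thesis
    using that[OF l gauss_bound(1)[OF l c(1) c1]] gauss_bound(2)[OF l c(1) c1, folded \<rho>_def] v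
    by linarith
qed

lemma hb_antitone:
  assumes l: "l > 0" and ab: "0 \<le> a" "a \<le> b"
  shows "hb l b \<le> hb l a"
proof -
  have "(\<lambda>z. - hb l z) a \<le> (\<lambda>z. - hb l z) b"
  proof (rule DERIV_nonneg_imp_nondecreasing[OF ab(2)])
    fix x assume "a \<le> x" "x \<le> b"
    then show "\<exists>y. ((\<lambda>z. - hb l z) has_real_derivative y) (at x) \<and> 0 \<le> y"
      using hb_deriv[OF l, of x] fb_nonneg[OF l, of x] ab by auto
  qed
  then show ?thesis by simp
qed

lemma pointwise:
  fixes y :: "nat \<Rightarrow> real"
  assumes s: "s \<ge> 1" and sig: "\<sigma> > 0" and siga: "\<sigma>a > 0" and tm: "\<tau> < m1" and l: "l > 0"
  defines "sd0 \<equiv> sqrt (PRSS \<sigma>a s) / (real s + 2)"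
  defines "c \<equiv> \<sigma> / (sqrt (real s) * sd0)"
  defines "w \<equiv> (real s * m1 - (\<Sum>i=1..s. y i)) / (sqrt (real s) * \<sigma>)"
  shows "0 \<le> Nrb \<sigma>a y s \<tau> \<and> Nrb \<sigma>a y s \<tau> \<le> Gfun l c w"
proof -
  define m where "m = ybar y s"
  define sd where "sd = sqrt (RSS y s + PRSS \<sigma>a s) / (real s + 2)"
  have sp: "real s > 0" using s by simp
  have P: "PRSS \<sigma>a s > 0" unfolding PRSS_def using siga by simp
  have R: "RSS y s \<ge> 0" unfolding RSS_def by (intro sum_nonneg) auto
  have sd0: "sd0 > 0" unfolding sd0_def using P by simp
  have sdge: "sd0 \<le> sd" unfolding sd0_def sd_def using R by (intro divide_right_mono real_sqrt_le_mono) auto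
  have sdp: "sd > 0" using sd0 sdge by linarith
  have c0: "c > 0" unfolding c_def using sig sd0 sp by simp
  define Q where "Q = Qrb \<sigma>a y s \<tau>"
  have Qeq: "Q = measure (density lborel (\<lambda>x. ennreal (normal_density m sd x))) {\<tau><..}"
    unfolding Q_def Qrb_def reboot_law_def m_def sd_def by simp
  have Q1: "Q \<le> 1" unfolding Qeq by (rule Q_le1[OF sdp])
  have N: "Nrb \<sigma>a y s \<tau> = 1 / Q - 1" unfolding Nrb_def Q_def by simp
  have sumeq: "(\<Sum>i=1..s. y i) = real s * m" unfolding m_def ybar_def using sp by simp
  show ?thesis
  proof (cases "\<tau> \<le> m")
    case True
    have Qh: "1/2 \<le> Q" unfolding Qeq by (rule Q_half[OF sdp True])
    have "1 / Q \<le> 2" using Qh by (simp add: divide_le_eq)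
    moreover have "1 \<le> 1 / Q" using Q1 Qh by (simp add: le_divide_eq)
    moreover have "1 \<le> Gfun l c w"
    proof (cases "w \<le> 0")
      case False
      then have "c * w \<ge> 0" using c0 by simp
      from hb_bounds[OF l this] have "1 / hb l (c * w) \<ge> 2" by (simp add: le_divide_eq)
      then show ?thesis using False by (simp add: Gfun_def)
    qed (simp add: Gfun_def)
    ultimately show ?thesis unfolding N by linarith
  next
    case False
    then have mt: "m < \<tau>" by simp
    have wpos: "w > 0" unfolding w_def sumeq using mt tm sp sig by (simp add: algebra_simps)
    have cw: "c * w = (m1 - m) / sd0"
    proof -
      have e1: "real s * m1 - real s * m = real s * (m1 - m)" by (simp add: algebra_simps)
      have "c * w = (\<sigma> * (real s * (m1 - m))) / ((sqrt (real s) * sd0) * (sqrt (real s) * \<sigma>))"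
        unfolding c_def w_def sumeq e1 by (rule times_divide_times_eq)
      also have "(sqrt (real s) * sd0) * (sqrt (real s) * \<sigma>) = (sqrt (real s) * sqrt (real s)) * (sd0 * \<sigma>)"
        by (simp only: ac_simps)
      also have "sqrt (real s) * sqrt (real s) = real s" using sp by simp
      also have "\<sigma> * (real s * (m1 - m)) / (real s * (sd0 * \<sigma>)) = ((\<sigma> * real s) * (m1 - m)) / ((\<sigma> * real s) * sd0)"
        by (simp only: ac_simps)
      also have "\<dots> = (m1 - m) / sd0" using sp sig by (intro mult_divide_mult_cancel_left) auto
      finally show ?thesis .
    qed
    define z where "z = (\<tau> - m) / sd"
    have z0: "z \<ge> 0" unfolding z_def using mt sdp by simp
    have "z \<le> (\<tau> - m) / sd0" unfolding z_def using mt sdp sd0 sdge by (intro divide_left_mono) auto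
    also have "\<dots> \<le> (m1 - m) / sd0" using tm sd0 by (intro divide_right_mono) auto
    finally have zc: "z \<le> c * w" unfolding cw .
    have "hb l (c * w) \<le> hb l z" by (rule hb_antitone[OF l z0 zc])
    also have "hb l z \<le> Q" unfolding Qeq z_def by (rule Q_lower[OF sdp l]) (use mt in auto)
    finally have hQ: "hb l (c * w) \<le> Q" .
    have hp: "hb l (c * w) > 0" using hb_bounds(1)[OF l] z0 zc by auto
    have "1 / Q \<le> 1 / hb l (c * w)" using hQ hp by (intro divide_left_mono) auto
    moreover have "1 \<le> 1 / Q" using Q1 hQ hp by (simp add: le_divide_eq)
    ultimately show ?thesis unfolding N using wpos by (simp add: Gfun_def)
  qed
qed

lemma qfun_meas:
  "(\<lambda>p::real \<times> real. measure (density lborel (\<lambda>x. ennreal (normal_density (fst p) (snd p) x))) {t<..})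
     \<in> borel_measurable borel"
proof -
  have eq: "measure (density lborel (\<lambda>x. ennreal (normal_density (fst p) (snd p) x))) {t<..}
     = enn2real (\<integral>\<^sup>+x. ennreal (normal_density (fst p) (snd p) x) * indicator {t<..} x \<partial>lborel)" for p :: "real \<times> real"
    unfolding measure_def by (subst emeasure_density) auto
  have m1: "(\<lambda>q::(real \<times> real) \<times> real. ennreal (normal_density (fst (fst q)) (snd (fst q)) (snd q)) * indicator {t<..} (snd q))
      \<in> borel_measurable ((borel \<Otimes>\<^sub>M borel) \<Otimes>\<^sub>M borel)"
    unfolding normal_density_def by measurable
  have se: "sets ((borel \<Otimes>\<^sub>M borel) \<Otimes>\<^sub>M (borel::real measure)) = sets ((borel::(real\<times>real) measure) \<Otimes>\<^sub>M lborel)"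
    by (rule sets_pair_measure_cong) (simp only: borel_prod, simp)
  have m2: "(\<lambda>q::(real \<times> real) \<times> real. ennreal (normal_density (fst (fst q)) (snd (fst q)) (snd q)) * indicator {t<..} (snd q))
      \<in> borel_measurable ((borel::(real\<times>real) measure) \<Otimes>\<^sub>M lborel)"
    using m1 by (simp add: measurable_cong_sets[OF se refl])
  have m3: "(\<lambda>p::real\<times>real. \<integral>\<^sup>+x. ennreal (normal_density (fst p) (snd p) x) * indicator {t<..} x \<partial>lborel) \<in> borel_measurable borel"
    using lborel.borel_measurable_nn_integral[of "\<lambda>p x. ennreal (normal_density (fst p) (snd p) x) * indicator {t<..} x" borel] m2
    by (simp add: split_beta')
  show ?thesis unfolding eq using m3 by measurable
qed

lemma c_facts:
  fixes s :: nat and \<sigma> \<sigma>a :: real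
  assumes s: "s \<ge> 1" and sig: "\<sigma> > 0" and siga: "\<sigma>a > 0" and r: "\<sigma>a / \<sigma> > 3/2"
  defines "sd0 \<equiv> sqrt (PRSS \<sigma>a s) / (real s + 2)"
  defines "c \<equiv> \<sigma> / (sqrt (real s) * sd0)"
  shows "c \<ge> 0" "c^2 < 2/3" "11/10 + 1 / sqrt (1 - 3/2 * c^2) \<le> Mbound (\<sigma>a / \<sigma>)"
proof -
  have sp: "real s > 0" using s by simp
  have P: "PRSS \<sigma>a s > 0" unfolding PRSS_def using siga by simp
  have sd0: "sd0 > 0" unfolding sd0_def using P by simp
  show "c \<ge> 0" unfolding c_def using sig sd0 sp by simp
  define r where "r = \<sigma>a / \<sigma>"
  have rp: "r > 3/2" using r unfolding r_def .
  have sd02: "sd0^2 = 2 * \<sigma>a^2 / (real s + 2)"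
  proof -
    have "sd0^2 = PRSS \<sigma>a s / (real s + 2)^2" unfolding sd0_def using P by (simp add: power_divide)
    also have "\<dots> = ((real s + 2) * (2 * \<sigma>a^2)) / ((real s + 2) * (real s + 2))"
      unfolding PRSS_def by (simp add: power2_eq_square ac_simps)
    also have "\<dots> = 2 * \<sigma>a^2 / (real s + 2)" using sp by (intro mult_divide_mult_cancel_left) auto
    finally show ?thesis .
  qed
  have c2: "c^2 = (real s + 2) / (2 * real s * r^2)"
    unfolding c_def r_def using sp sig siga sd0
    by (simp add: power_divide power_mult_distrib sd02 field_simps)
  have "3/2 * c^2 \<le> (3 / (2 * r))^2"
  proof -
    have "3/2 * c^2 = 3 * (real s + 2) / (4 * real s * r^2)" unfolding c2 by (simp add: field_simps)
    also have "\<dots> \<le> 3 * (3 * real s) / (4 * real s * r^2)"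
      using s rp by (intro divide_right_mono mult_left_mono) auto
    also have "\<dots> = (3 / (2 * r))^2" using sp rp by (simp add: field_simps power2_eq_square)
    finally show ?thesis .
  qed
  moreover have lt: "(3 / (2 * r))^2 < 1"
  proof -
    have "3 / (2 * r) < 1" using rp by (simp add: divide_less_eq)
    moreover have "0 \<le> 3 / (2 * r)" using rp by simp
    ultimately show ?thesis by (simp add: power_less_one_iff)
  qed
  ultimately have le: "3/2 * c^2 \<le> (3 / (2 * r))^2" and "3/2 * c^2 < 1" by auto
  then show "c^2 < 2/3" by simp
  have "sqrt (1 - (3 / (2 * r))^2) \<le> sqrt (1 - 3/2 * c^2)" using le by simp
  moreover have "sqrt (1 - (3 / (2 * r))^2) > 0" using lt by simp
  ultimately have "1 / sqrt (1 - 3/2 * c^2) \<le> 1 / sqrt (1 - (3 / (2 * r))^2)"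
    by (intro divide_left_mono) auto
  then show "11/10 + 1 / sqrt (1 - 3/2 * c^2) \<le> Mbound (\<sigma>a / \<sigma>)"
    unfolding Mbound_def r_def by simp
qed

theorem mainTheorem3:
  fixes M :: "'a measure" and Y :: "nat \<Rightarrow> nat \<Rightarrow> 'a \<Rightarrow> real"
    and K k s T :: nat and \<mu> :: "nat \<Rightarrow> real" and \<sigma> \<sigma>a :: real
  assumes "prob_space M"
    and "\<sigma> > 0" and "\<sigma>a > 0" and "\<sigma>a / \<sigma> > 3/2"
    and "k \<in> {1..K}"
    and "\<forall>j\<in>{1..K}. \<mu> j \<le> \<mu> 1"
    and "\<mu> 1 - \<mu> k > 0"
    and "prob_space.indep_vars M (\<lambda>_. borel) (\<lambda>(j, i). Y j i) ({1..K} \<times> {1..})"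
    and "\<forall>j\<in>{1..K}. \<forall>i\<ge>1. distributed M lborel (Y j i) (normal_density (\<mu> j) \<sigma>)"
    and "s \<ge> 1"
  shows "integrable M (\<lambda>\<omega>. min (Nrb \<sigma>a (\<lambda>i. Y 1 i \<omega>) s ((\<mu> 1 + \<mu> k) / 2)) (real T))
    \<and> (\<integral>\<omega>. min (Nrb \<sigma>a (\<lambda>i. Y 1 i \<omega>) s ((\<mu> 1 + \<mu> k) / 2)) (real T) \<partial>M)
        \<le> Mbound (\<sigma>a / \<sigma>)"
proof -
  interpret P: prob_space M by fact
  have sig: "\<sigma> > 0" and siga: "\<sigma>a > 0" and s: "s \<ge> 1" using assms by auto
  have K1: "1 \<in> {1..K}" using assms(5) by auto
  define m1 where "m1 = \<mu> 1"
  define \<tau> where "\<tau> = (\<mu> 1 + \<mu> k) / 2"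
  have tm: "\<tau> < m1" using assms(7) unfolding \<tau>_def m1_def by simp
  define sd0 where "sd0 = sqrt (PRSS \<sigma>a s) / (real s + 2)"
  define c where "c = \<sigma> / (sqrt (real s) * sd0)"
  have cf: "c \<ge> 0" "c^2 < 2/3" "11/10 + 1 / sqrt (1 - 3/2 * c^2) \<le> Mbound (\<sigma>a / \<sigma>)"
    using c_facts[OF s sig siga assms(4)] unfolding c_def sd0_def by auto
  obtain l where l: "l > 0" and intG: "integrable lborel (\<lambda>x. std_normal_density x * Gfun l c x)"
    and bndG: "(\<integral>x. std_normal_density x * Gfun l c x \<partial>lborel) \<le> 11/10 + 1 / sqrt (1 - 3/2 * c^2)"
    using gauss_final[OF cf(1,2)] by blast
  have sp: "real s > 0" using s by simp
  define S where "S \<omega> = (\<Sum>i=1..s. Y 1 i \<omega>)" for \<omega>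
  define W where "W \<omega> = (real s * m1 - S \<omega>) / (sqrt (real s) * \<sigma>)" for \<omega>
  define Nf where "Nf \<omega> = Nrb \<sigma>a (\<lambda>i. Y 1 i \<omega>) s \<tau>" for \<omega>
  have Ymeas[measurable]: "Y 1 i \<in> borel_measurable M" if "i \<ge> 1" for i
  proof -
    have d: "distributed M lborel (Y 1 i) (normal_density (\<mu> 1) \<sigma>)" using assms(9) K1 that by blast
    show ?thesis using distributed_measurable[OF d] by simp
  qed
  have pw: "0 \<le> Nf \<omega> \<and> Nf \<omega> \<le> Gfun l c (W \<omega>)" for \<omega>
    unfolding Nf_def W_def S_def c_def sd0_def
    by (rule pointwise[OF s sig siga tm l])
  define qf where "qf p = measure (density lborel (\<lambda>x. ennreal (normal_density (fst p) (snd p) x))) {\<tau><..}" for p :: "real \<times> real"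
  have qf_meas[measurable]: "qf \<in> borel_measurable borel" unfolding qf_def by (rule qfun_meas)
  define ym where "ym \<omega> = (\<Sum>i=1..s. Y 1 i \<omega>) / real s" for \<omega>
  define sdm where "sdm \<omega> = sqrt ((\<Sum>i=1..s. (Y 1 i \<omega> - ym \<omega>)^2) + PRSS \<sigma>a s) / (real s + 2)" for \<omega>
  have ym_meas[measurable]: "ym \<in> borel_measurable M"
    unfolding ym_def by (intro borel_measurable_divide borel_measurable_sum Ymeas) auto
  have rss_meas: "(\<lambda>\<omega>. (\<Sum>i=1..s. (Y 1 i \<omega> - ym \<omega>)^2)) \<in> borel_measurable M"
    by (intro borel_measurable_sum borel_measurable_power borel_measurable_diff Ymeas ym_meas) auto
  have sdm_meas[measurable]: "sdm \<in> borel_measurable M"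
    unfolding sdm_def using rss_meas by measurable
  have Nf_eq: "Nf \<omega> = 1 / qf (ym \<omega>, sdm \<omega>) - 1" for \<omega>
    unfolding Nf_def Nrb_def Qrb_def reboot_law_def qf_def ym_def sdm_def RSS_def ybar_def by simp
  have Nf_meas[measurable]: "Nf \<in> borel_measurable M"
    unfolding Nf_eq[abs_def] by measurable
  have int1: "integrable M (\<lambda>\<omega>. min (Nf \<omega>) (real T))"
  proof (rule P.integrable_const_bound[where B="real T"])
    show "AE x in M. norm (min (Nf x) (real T)) \<le> real T"
      using pw by (auto intro!: AE_I2)
  qed measurable
  have Sd: "distributed M lborel S (normal_density (real s * m1) (sqrt (real s * \<sigma>^2)))"
  proof -
    let ?I = "{1::nat} \<times> {1..s}"
    have ind: "P.indep_vars (\<lambda>_. borel) (\<lambda>(j, i). Y j i) ?I"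
      by (rule P.indep_vars_subset[OF assms(8)]) (use K1 in auto)
    have "distributed M lborel (\<lambda>x. \<Sum>p\<in>?I. (\<lambda>(j, i). Y j i) p x)
        (normal_density (\<Sum>p\<in>?I. m1) (sqrt (\<Sum>p\<in>?I. \<sigma>^2)))"
      by (rule P.sum_indep_normal[OF _ _ ind]) (use sig assms(9) K1 s in \<open>auto simp: m1_def\<close>)
    moreover have "(\<lambda>x. \<Sum>p\<in>?I. (\<lambda>(j, i). Y j i) p x) = S"
    proof
      fix x
      have "(\<Sum>p\<in>?I. (\<lambda>(j, i). Y j i) p x) = (\<Sum>i\<in>{1..s}. Y 1 i x)"
      proof -
        have "(\<lambda>p. (\<lambda>(j, i). Y j i) p x) = (\<lambda>(j, i). Y j i x)" by auto
        then have "(\<Sum>p\<in>?I. (\<lambda>(j, i). Y j i) p x) = (\<Sum>(j, i)\<in>?I. Y j i x)"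
          by (intro sum.cong) (auto split: prod.splits)
        also have "\<dots> = (\<Sum>j\<in>{1::nat}. \<Sum>i\<in>{1..s}. Y j i x)" by (rule sum.cartesian_product[symmetric])
        finally show ?thesis by simp
      qed
      then show "(\<Sum>p\<in>?I. (\<lambda>(j, i). Y j i) p x) = S x" unfolding S_def by simp
    qed
    moreover have "(\<Sum>p\<in>?I. m1) = real s * m1" "(\<Sum>p\<in>?I. \<sigma>^2) = real s * \<sigma>^2" by auto
    ultimately show ?thesis by simp
  qed
  have Wd: "distributed M lborel W std_normal_density"
  proof -
    define \<alpha> where "\<alpha> = - 1 / (sqrt (real s) * \<sigma>)"
    define \<beta> where "\<beta> = real s * m1 / (sqrt (real s) * \<sigma>)"
    have sq: "sqrt (real s * \<sigma>^2) = sqrt (real s) * \<sigma>" using sig by (simp add: real_sqrt_mult)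
    have pos: "0 < sqrt (real s * \<sigma>^2)" using sp sig by simp
    have an: "\<alpha> \<noteq> 0" unfolding \<alpha>_def using sp sig by simp
    have "distributed M lborel (\<lambda>x. \<beta> + \<alpha> * S x)
       (normal_density (\<beta> + \<alpha> * (real s * m1)) (\<bar>\<alpha>\<bar> * sqrt (real s * \<sigma>^2)))"
      by (rule P.normal_density_affine[OF Sd pos an])
    moreover have "(\<lambda>x. \<beta> + \<alpha> * S x) = W"
      unfolding W_def \<alpha>_def \<beta>_def using sp sig by (auto simp: field_simps)
    moreover have "\<beta> + \<alpha> * (real s * m1) = 0" unfolding \<alpha>_def \<beta>_def by simp
    moreover have "\<bar>\<alpha>\<bar> * sqrt (real s * \<sigma>^2) = 1" unfolding \<alpha>_def sq using sp sig by simp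
    ultimately show ?thesis by simp
  qed
  have W_meas[measurable]: "W \<in> borel_measurable M" using distributed_measurable[OF Wd] by simp
  have intGW: "integrable M (\<lambda>\<omega>. Gfun l c (W \<omega>))"
    using distributed_integrable[OF Wd, of "Gfun l c"] intG by simp
  have EG: "(\<integral>\<omega>. Gfun l c (W \<omega>) \<partial>M) = (\<integral>x. std_normal_density x * Gfun l c x \<partial>lborel)"
    using distributed_integral[OF Wd, of "Gfun l c"] by simp
  have "(\<integral>\<omega>. min (Nf \<omega>) (real T) \<partial>M) \<le> (\<integral>\<omega>. Gfun l c (W \<omega>) \<partial>M)"
    by (intro integral_mono int1 intGW) (use pw in \<open>auto intro: min.coboundedI1\<close>)
  also have "\<dots> \<le> Mbound (\<sigma>a / \<sigma>)" using EG bndG cf(3) by linarith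
  finally show ?thesis using int1 unfolding Nf_def \<tau>_def by simp
qed

end
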